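(* Let $\mathcal{T}$ be an $l$-eligible microdata table and run the algorithm described in the context (arbitrary tie-breaking). If the algorithm terminates during Phase Two, then the final residue set $\ddot{R}$ together with the remaining groups is a feasible solution of the reformulated tuple minimization problem and $|\ddot{R}| \le OPT + l - 1$.
   Context: A microdata table $\mathcal{T}$ is a multiset of $n$ tuples with values on $d$ quasi-identifier (QI) attributes and one sensitive attribute (SA). For a multiset $Q$ and SA value $v$, $h(Q,v)$ is the number of tuples in $Q$ with SA value $v$, $h(Q)=\max_v h(Q,v)$, pillars of $Q$ are the $v$ with $h(Q,v)=h(Q)$; $Q$ is $l$-eligible if $|Q|\ge l\cdot h(Q)$. Let $Q_1,\dots,Q_s$ be the maximal classes of tuples of $\mathcal{T}$ with identical values on all QI attributes. Reformulated tuple minimization: choose sub-multisets $Q'_i\subseteq Q_i$ and $R'=\mathcal{T}\setminus\bigcup_i Q'_i$ with all $Q'_i$ and $R'$ $l$-eligible, minimizing $|R'|$; $OPT$ is the minimum. The algorithm only moves tuples from the groups into a set $R$ (initially empty). Phase One: for each $i$, while $Q_i$ is not $l$-eligible, move a tuple of a pillar of $Q_i$ to $R$; if then $R$ is $l$-eligible, terminate. Phase Two terminology (w.r.t. current state): a group $Q$ is thin if $|Q|=l\cdot h(Q)$ and fat if $|Q|\ge l\cdot h(Q)+1$; $Q$ is conflicting if some pillar of $Q$ is a pillar of $R$; $Q$ is dead if thin and conflicting, alive otherwise; an SA value $v$ is alive if some alive group $Q$ has $h(Q,v)>0$. Phase Two iterates: if no SA value is alive, Phase Two ends (go to Phase Three).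 Otherwise pick an alive SA value $v$ minimizing $h(R,v)$ and an alive group $Q$ with $h(Q,v)>0$ (ties arbitrary); if $Q$ is fat move one tuple with SA value $v$ from $Q$ to $R$; if $Q$ is thin move one tuple of each pillar of $Q$ to $R$. If $R$ is now $l$-eligible, the algorithm terminates. *)

theory Defs
  imports "HOL-Library.Multiset"
begin

text \<open>A tuple is a pair (QI value, SA value); the QI value stands for the vector of
  values on all d QI attributes. A table is a multiset of tuples.\<close>

definition hv :: "('q \<times> 's) multiset \<Rightarrow> 's \<Rightarrow> nat" where
  "hv Q v = count (image_mset snd Q) v"

definition hmax :: "('q \<times> 's) multiset \<Rightarrow> nat" where
  "hmax Q = Max (insert 0 (hv Q ` snd ` set_mset Q))"

definition pillar :: "('q \<times> 's) multiset \<Rightarrow> 's \<Rightarrow> bool" where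
  "pillar Q v \<longleftrightarrow> hv Q v = hmax Q"

definition eligible :: "nat \<Rightarrow> ('q \<times> 's) multiset \<Rightarrow> bool" where
  "eligible l Q \<longleftrightarrow> size Q \<ge> l * hmax Q"

definition QIs :: "('q \<times> 's) multiset \<Rightarrow> 'q set" where
  "QIs T = fst ` set_mset T"

definition qclass :: "('q \<times> 's) multiset \<Rightarrow> 'q \<Rightarrow> ('q \<times> 's) multiset" where
  "qclass T q = filter_mset (\<lambda>t. fst t = q) T"

definition is_solution ::
  "nat \<Rightarrow> ('q \<times> 's) multiset \<Rightarrow> ('q \<Rightarrow> ('q \<times> 's) multiset) \<Rightarrow> ('q \<times> 's) multiset \<Rightarrow> bool" where
  "is_solution l T Q' R' \<longleftrightarrow>
     (\<forall>q\<in>QIs T. Q' q \<subseteq># qclass T q \<and> eligible l (Q' q)) \<and>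
     R' = T - (\<Sum>q\<in>QIs T. Q' q) \<and> eligible l R'"

definition OPT :: "nat \<Rightarrow> ('q \<times> 's) multiset \<Rightarrow> nat" where
  "OPT l T = (LEAST n. \<exists>Q' R'. is_solution l T Q' R' \<and> size R' = n)"

text \<open>Algorithm state: the multiset R of tuples moved so far. The current group of QI
  value q consists of the tuples of its class not yet moved into R.\<close>
definition grp :: "('q \<times> 's) multiset \<Rightarrow> ('q \<times> 's) multiset \<Rightarrow> 'q \<Rightarrow> ('q \<times> 's) multiset" where
  "grp T R q = qclass (T - R) q"

definition p1_step :: "nat \<Rightarrow> ('q \<times> 's) multiset \<Rightarrow> ('q \<times> 's) multiset \<Rightarrow> ('q \<times> 's) multiset \<Rightarrow> bool" where
  "p1_step l T R R' \<longleftrightarrow>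
     (\<exists>q\<in>QIs T. \<not> eligible l (grp T R q) \<and>
        (\<exists>v. pillar (grp T R q) v \<and> (q, v) \<in># grp T R q \<and> R' = R + {#(q, v)#}))"

definition thin :: "nat \<Rightarrow> ('q \<times> 's) multiset \<Rightarrow> bool" where
  "thin l Q \<longleftrightarrow> size Q = l * hmax Q"

definition fat :: "nat \<Rightarrow> ('q \<times> 's) multiset \<Rightarrow> bool" where
  "fat l Q \<longleftrightarrow> size Q \<ge> l * hmax Q + 1"

definition conflicting :: "('q \<times> 's) multiset \<Rightarrow> ('q \<times> 's) multiset \<Rightarrow> bool" where
  "conflicting R Q \<longleftrightarrow> (\<exists>v. pillar Q v \<and> pillar R v)"

definition alive_grp :: "nat \<Rightarrow> ('q \<times> 's) multiset \<Rightarrow> ('q \<times> 's) multiset \<Rightarrow> 'q \<Rightarrow> bool" where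
  "alive_grp l T R q \<longleftrightarrow> q \<in> QIs T \<and> \<not> (thin l (grp T R q) \<and> conflicting R (grp T R q))"

definition alive_val :: "nat \<Rightarrow> ('q \<times> 's) multiset \<Rightarrow> ('q \<times> 's) multiset \<Rightarrow> 's \<Rightarrow> bool" where
  "alive_val l T R v \<longleftrightarrow> (\<exists>q. alive_grp l T R q \<and> hv (grp T R q) v > 0)"

text \<open>Phase Two: one iteration, executed only while R is not yet l-eligible
  (otherwise the algorithm has terminated).\<close>
definition p2_step :: "nat \<Rightarrow> ('q \<times> 's) multiset \<Rightarrow> ('q \<times> 's) multiset \<Rightarrow> ('q \<times> 's) multiset \<Rightarrow> bool" where
  "p2_step l T R R' \<longleftrightarrow> \<not> eligible l R \<and>
     (\<exists>v q. alive_val l T R v \<and> (\<forall>u. alive_val l T R u \<longrightarrow> hv R v \<le> hv R u) \<and>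
        alive_grp l T R q \<and> hv (grp T R q) v > 0 \<and>
        (if fat l (grp T R q) then R' = R + {#(q, v)#}
         else R' = R + mset_set ((\<lambda>u. (q, u)) ` {u. pillar (grp T R q) u})))"

end

theory Submission imports Defs begin

lemma hv_add: "hv (A + B) v = hv A v + hv B v" by (simp add: hv_def)

lemma hv_mono: "A \<subseteq># B \<Longrightarrow> hv A v \<le> hv B v"
  by (simp add: hv_def image_mset_subseteq_mono mset_subset_eq_count)

lemma hv_filter_fst: "hv (filter_mset (\<lambda>t. fst t = q) M) u = count M (q,u)"
  by (induct M) (auto simp: hv_def)

lemma hv_le_hmax: "hv Q v \<le> hmax Q"
proof (cases "v \<in> snd ` set_mset Q")
  case True thus ?thesis unfolding hmax_def by (intro Max_ge) auto
next
  case False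
  hence "hv Q v = 0" unfolding hv_def by (simp add: count_eq_zero_iff)
  thus ?thesis by simp
qed

lemma hmax_empty: "hmax {#} = 0" by (simp add: hmax_def)

lemma hmax_le_iff: "hmax Q \<le> k \<longleftrightarrow> (\<forall>v. hv Q v \<le> k)"
proof
  assume "hmax Q \<le> k" thus "\<forall>v. hv Q v \<le> k" using hv_le_hmax[of Q] by (meson order_trans)
next
  assume "\<forall>v. hv Q v \<le> k" thus "hmax Q \<le> k" unfolding hmax_def by (subst Max_le_iff) auto
qed

lemma hmax_mono: "A \<subseteq># B \<Longrightarrow> hmax A \<le> hmax B"
  by (simp add: hmax_le_iff le_trans[OF hv_mono hv_le_hmax])

lemma sum_hv_filter: "finite U \<Longrightarrow> (\<Sum>u\<in>U. hv M u) = size (filter_mset (\<lambda>t. snd t \<in> U) M)"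
proof (induct M)
  case empty thus ?case by (simp add: hv_def)
next
  case (add x M)
  have "(\<Sum>u\<in>U. hv (add_mset x M) u) = (\<Sum>u\<in>U. hv M u + (if u = snd x then 1 else 0))"
    by (intro sum.cong) (auto simp: hv_def)
  also have "\<dots> = (\<Sum>u\<in>U. hv M u) + (if snd x \<in> U then 1 else 0)"
    using add.prems by (simp add: sum.distrib)
  finally show ?case using add by simp
qed

lemma sum_hv_le_size: "finite U \<Longrightarrow> (\<Sum>u\<in>U. hv M u) \<le> size M"
  by (simp add: sum_hv_filter size_filter_mset_lesseq)

lemma size_eq_sum_hv: assumes "finite U" "snd ` set_mset M \<subseteq> U" shows "size M = (\<Sum>u\<in>U. hv M u)"
proof -
  have "{#t \<in># M. snd t \<in> U#} = {#t \<in># M. True#}" by (rule filter_mset_cong) (use assms in auto)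
  thus ?thesis using assms by (simp add: sum_hv_filter)
qed

lemma count_le_hv: "count M (q,u) \<le> hv M u"
  by (metis hv_filter_fst hv_mono multiset_filter_subset)

lemma hv_grp: "hv (grp T R q) u = count T (q,u) - count R (q,u)"
  unfolding grp_def qclass_def by (subst hv_filter_fst) simp

lemma hv_qclass: "hv (qclass T q) u = count T (q,u)"
  by (simp add: qclass_def hv_filter_fst)

lemma grp_sub_T: "grp T R q \<subseteq># T"
  unfolding grp_def qclass_def by (meson diff_subset_eq_self multiset_filter_subset subset_mset.order_trans)

lemma grp_sub_qclass: "grp T R q \<subseteq># qclass T q"
  unfolding grp_def qclass_def by (simp add: multiset_filter_mono)

lemma sub_qclass_hv: assumes "Y \<subseteq># qclass T q" shows "hv Y w = count Y (q,w)"
proof -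
  have "\<And>t. t \<in># Y \<Longrightarrow> fst t = q"
  proof -
    fix t assume "t \<in># Y"
    thus "fst t = q" using mset_subset_eqD[OF assms] unfolding qclass_def by fastforce
  qed
  hence "filter_mset (\<lambda>t. fst t = q) Y = filter_mset (\<lambda>t. True) Y" by (intro filter_mset_cong) auto
  hence "filter_mset (\<lambda>t. fst t = q) Y = Y" by simp
  thus ?thesis using hv_filter_fst[of q Y w] by simp
qed

lemma snd_sub: "M \<subseteq># T \<Longrightarrow> snd ` set_mset M \<subseteq> snd ` set_mset T"
  by (meson image_mono set_mset_mono)

lemma hmax_grp_mono: assumes a: "\<And>x. count R x \<le> count R' x" shows "hmax (grp T R' q) \<le> hmax (grp T R q)"
proof (subst hmax_le_iff, intro allI)
  fix v
  have "hv (grp T R' q) v \<le> hv (grp T R q) v" using a[of "(q,v)"] by (simp add: hv_grp diff_le_mono2)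
  thus "hv (grp T R' q) v \<le> hmax (grp T R q)" using hv_le_hmax[of "grp T R q" v] by linarith
qed

definition gq :: "('q \<times> 's) multiset \<Rightarrow> 'q \<Rightarrow> nat \<Rightarrow> nat" where
  "gq T q L = (\<Sum>u\<in>snd ` set_mset T. min (count T (q,u)) L)"

lemma gq_step: assumes "l * Suc L \<le> gq T q (Suc L)" shows "l * L \<le> gq T q L"
proof -
  define V where "V = snd ` set_mset T"
  define K where "K = {u\<in>V. Suc L \<le> count T (q,u)}"
  have fin: "finite V" unfolding V_def by simp
  have "gq T q (Suc L) = (\<Sum>u\<in>V. min (count T (q,u)) L + (if Suc L \<le> count T (q,u) then 1 else 0))"
    unfolding gq_def V_def by (intro sum.cong) auto
  also have "\<dots> = gq T q L + (\<Sum>u\<in>V. if Suc L \<le> count T (q,u) then 1 else 0)"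
    unfolding gq_def V_def by (simp add: sum.distrib)
  also have "(\<Sum>u\<in>V. if Suc L \<le> count T (q,u) then 1 else 0) = card K"
    unfolding K_def using sum.inter_filter[OF fin, of "\<lambda>_. 1::nat"] by simp
  finally have eq: "gq T q (Suc L) = gq T q L + card K" .
  have "card K * L = (\<Sum>u\<in>K. min (count T (q,u)) L)" unfolding K_def by simp
  also have "\<dots> \<le> (\<Sum>u\<in>V. min (count T (q,u)) L)" by (rule sum_mono2) (use fin in \<open>auto simp: K_def\<close>)
  finally have ge: "card K * L \<le> gq T q L" unfolding gq_def V_def .
  show ?thesis
  proof (cases "l \<le> card K")
    case True
    hence "l * L \<le> card K * L" by simp
    thus ?thesis using ge by linarith
  next
    case False
    thus ?thesis using assms eq by simp
  qed
qed

lemma gq_down: "c \<le> M \<Longrightarrow> l * M \<le> gq T q M \<Longrightarrow> l * c \<le> gq T q c"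
  by (induct rule: inc_induct) (auto intro: gq_step)

definition inv1 :: "nat \<Rightarrow> ('q \<times> 's) multiset \<Rightarrow> ('q \<times> 's) multiset \<Rightarrow> bool" where
  "inv1 l T R \<longleftrightarrow> R \<subseteq># T \<and> (\<forall>q u. 0 < count R (q,u) \<longrightarrow>
      hmax (grp T R q) \<le> count T (q,u) - count R (q,u) + 1 \<and>
      gq T q (count T (q,u) - count R (q,u) + 1) < l * (count T (q,u) - count R (q,u) + 1))"

lemma inv1_init: "inv1 l T {#}" by (simp add: inv1_def)

lemma inv1_step:
  assumes inv: "inv1 l T R" and st: "p1_step l T R R'"
  shows "inv1 l T R'"
proof -
  obtain q v where ne: "\<not> eligible l (grp T R q)" and pil: "pillar (grp T R q) v"
    and mem: "(q, v) \<in># grp T R q" and R': "R' = R + {#(q, v)#}"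
    using st unfolding p1_step_def by blast
  define G where "G = grp T R q"
  define H where "H = hmax G"
  have sub: "R \<subseteq># T" using inv inv1_def by blast
  have hvG: "\<And>u. hv G u = count T (q,u) - count R (q,u)" unfolding G_def by (rule hv_grp)
  have "0 < count G (q,v)" using mem unfolding G_def by simp
  hence "1 \<le> hv G v" using count_le_hv[of G q v] by linarith
  hence H1: "1 \<le> H" and HV: "hv G v = H" using pil unfolding H_def G_def pillar_def by auto
  have ltv: "count R (q,v) < count T (q,v)" using hvG[of v] HV H1 by linarith
  have sub': "R' \<subseteq># T"
    using sub ltv unfolding R' by (intro mset_subset_eqI) (auto simp: mset_subset_eq_count)
  have key: "gq T q H < l * H"
  proof (cases "\<exists>u. 0 < count R (q,u) \<and> count T (q,u) - count R (q,u) + 1 = H")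
    case True
    then obtain u where "0 < count R (q,u)" "count T (q,u) - count R (q,u) + 1 = H" by blast
    thus ?thesis using inv unfolding inv1_def by metis
  next
    case False
    have "\<And>u. min (count T (q,u)) H \<le> hv G u"
    proof -
      fix u
      show "min (count T (q,u)) H \<le> hv G u"
      proof (cases "count R (q,u) = 0")
        case True thus ?thesis using hvG by simp
      next
        case F: False
        hence "H \<le> count T (q,u) - count R (q,u) + 1" using inv unfolding inv1_def H_def G_def by auto
        thus ?thesis using False F hvG by force
      qed
    qed
    hence "gq T q H \<le> (\<Sum>u\<in>snd ` set_mset T. hv G u)" unfolding gq_def by (intro sum_mono) auto
    also have "\<dots> = size G"
      by (rule size_eq_sum_hv[symmetric]) (auto simp: G_def intro: snd_sub[OF grp_sub_T, THEN subsetD])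
    also have "\<dots> < l * H" using ne unfolding eligible_def G_def H_def by simp
    finally show ?thesis .
  qed
  have cR': "\<And>x. count R' x = count R x + (if x = (q,v) then 1 else 0)" unfolding R' by simp
  have mono: "\<And>q'. hmax (grp T R' q') \<le> hmax (grp T R q')" by (rule hmax_grp_mono) (simp add: cR')
  show ?thesis unfolding inv1_def
  proof (rule conjI[OF sub'], intro allI impI)
    fix q' u assume pos: "0 < count R' (q',u)"
    show "hmax (grp T R' q') \<le> count T (q',u) - count R' (q',u) + 1 \<and>
      gq T q' (count T (q',u) - count R' (q',u) + 1) < l * (count T (q',u) - count R' (q',u) + 1)"
    proof (cases "(q',u) = (q,v)")
      case True
      hence e: "count T (q',u) - count R' (q',u) + 1 = H" using cR' hvG HV H1 by auto
      have "hmax (grp T R' q') \<le> H" using mono[of q'] True unfolding H_def G_def by simp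
      thus ?thesis using e key True by simp
    next
      case False
      hence ce: "count R' (q',u) = count R (q',u)" using cR' by simp
      have "0 < count R (q',u)" using pos ce by simp
      hence h1: "hmax (grp T R q') \<le> count T (q',u) - count R (q',u) + 1"
        and h2: "gq T q' (count T (q',u) - count R (q',u) + 1) < l * (count T (q',u) - count R (q',u) + 1)"
        using inv unfolding inv1_def by blast+
      show ?thesis using order_trans[OF mono[of q'] h1] h2 by (simp add: ce)
    qed
  qed
qed

lemma inv1_min:
  assumes inv: "inv1 l T R" and Y: "Y \<subseteq># qclass T q" and el: "eligible l Y"
  shows "count Y (q,u) \<le> count T (q,u) - count R (q,u)"
proof (rule ccontr)
  assume "\<not> ?thesis"
  hence lt: "count T (q,u) - count R (q,u) < count Y (q,u)" by simp
  define c where "c = count T (q,u) - count R (q,u)"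
  have YT: "count Y (q,u) \<le> count T (q,u)" using Y hv_qclass sub_qclass_hv hv_mono by metis
  hence pos: "0 < count R (q,u)" using lt by linarith
  have g: "gq T q (c + 1) < l * (c + 1)" using inv pos unfolding inv1_def c_def by blast
  define M where "M = hmax Y"
  have cM: "c + 1 \<le> M" using lt hv_le_hmax[of Y u] sub_qclass_hv[OF Y, of u] unfolding M_def c_def by simp
  have YsubT: "Y \<subseteq># T" using Y unfolding qclass_def by (meson multiset_filter_subset subset_mset.order_trans)
  have "size Y = (\<Sum>w\<in>snd ` set_mset T. hv Y w)" by (rule size_eq_sum_hv) (auto intro: snd_sub[OF YsubT, THEN subsetD])
  also have "\<dots> \<le> gq T q M" unfolding gq_def
  proof (intro sum_mono)
    fix w
    have "hv Y w \<le> count T (q,w)" using Y hv_qclass sub_qclass_hv hv_mono by metis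
    moreover have "hv Y w \<le> M" unfolding M_def by (rule hv_le_hmax)
    ultimately show "hv Y w \<le> min (count T (q,w)) M" by simp
  qed
  finally have lM: "l * M \<le> gq T q M" using el unfolding eligible_def M_def by linarith
  have "l * (c + 1) \<le> gq T q (c + 1)" by (rule gq_down[OF cM lM])
  thus False using g by simp
qed


lemma grp_notin: assumes "q \<notin> QIs T" shows "grp T R q = {#}"
proof (rule multiset_eqI)
  fix x
  have "fst x = q \<Longrightarrow> count T x = 0"
  proof (rule ccontr)
    assume "fst x = q" "count T x \<noteq> 0"
    hence "q \<in> QIs T" unfolding QIs_def by (metis count_eq_zero_iff image_eqI)
    thus False using assms by simp
  qed
  thus "count (grp T R q) x = count {#} x" unfolding grp_def qclass_def by auto
qed

lemma grp_add:
  assumes A: "A \<subseteq># grp T R q"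
  shows "grp T (R + A) q' = (if q' = q then grp T R q - A else grp T R q')"
proof (rule multiset_eqI)
  fix x
  have cA: "count A x \<le> count (grp T R q) x" using A by (simp add: mset_subset_eq_count)
  show "count (grp T (R + A) q') x = count (if q' = q then grp T R q - A else grp T R q') x"
    using cA unfolding grp_def qclass_def by auto
qed

lemma low_exists:
  assumes ne: "\<not> eligible l R" and el: "eligible l G" and pos: "0 < hv G v"
  shows "\<exists>w. 0 < hv G w \<and> hv R w < hmax R"
proof (rule ccontr)
  assume "\<not> ?thesis"
  hence allh: "\<And>w. 0 < hv G w \<Longrightarrow> hv R w = hmax R"
  proof -
    fix w assume "\<not> (\<exists>w. 0 < hv G w \<and> hv R w < hmax R)" "0 < hv G w"
    hence "\<not> hv R w < hmax R" by blast
    thus "hv R w = hmax R" using hv_le_hmax[of R w] by linarith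
  qed
  define W where "W = {w. 0 < hv G w}"
  have WS: "W \<subseteq> snd ` set_mset G" unfolding W_def hv_def by (auto simp: image_iff)
  hence finW: "finite W" by (rule finite_subset) simp
  have "snd ` set_mset G \<subseteq> W" unfolding W_def hv_def by auto
  hence "size G = (\<Sum>w\<in>W. hv G w)" using finW size_eq_sum_hv by blast
  also have "\<dots> \<le> (\<Sum>w\<in>W. hmax G)" by (intro sum_mono hv_le_hmax)
  finally have "size G \<le> card W * hmax G" by simp
  moreover have "l * hmax G \<le> size G" using el unfolding eligible_def by simp
  moreover have "0 < hmax G" using pos hv_le_hmax[of G v] by linarith
  ultimately have "l * hmax G \<le> card W * hmax G" "0 < hmax G" by linarith+
  hence lW: "l \<le> card W" by simp
  have "card W * hmax R = (\<Sum>w\<in>W. hv R w)" using allh unfolding W_def by simp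
  also have "\<dots> \<le> size R" using finW by (rule sum_hv_le_size)
  finally have "l * hmax R \<le> size R" using mult_le_mono1[OF lW, of "hmax R"] by linarith
  thus False using ne unfolding eligible_def by simp
qed

definition inv2 :: "nat \<Rightarrow> ('q \<times> 's) multiset \<Rightarrow> nat \<Rightarrow> ('q \<times> 's) multiset \<Rightarrow> bool" where
  "inv2 l T h R \<longleftrightarrow> R \<subseteq># T \<and> (\<forall>q. eligible l (grp T R q)) \<and> hmax R \<le> h \<and> size R < l * h + l"

lemma add_sub_T: "R \<subseteq># T \<Longrightarrow> A \<subseteq># grp T R q \<Longrightarrow> R + A \<subseteq># T"
proof -
  assume R: "R \<subseteq># T" and A: "A \<subseteq># grp T R q"
  have "A \<subseteq># T - R" using A unfolding grp_def qclass_def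
    by (meson multiset_filter_subset subset_mset.order_trans)
  hence "R + A \<subseteq># R + (T - R)" by simp
  thus ?thesis using R by (simp add: subset_mset.add_diff_inverse)
qed

lemma inv2_step:
  assumes inv: "inv2 l T h R" and st: "p2_step l T R R'"
  shows "inv2 l T h R'"
proof -
  have ne: "\<not> eligible l R" using st unfolding p2_step_def by blast
  obtain v q where av: "alive_val l T R v" and vmin: "\<forall>u. alive_val l T R u \<longrightarrow> hv R v \<le> hv R u"
    and ag: "alive_grp l T R q" and pos: "0 < hv (grp T R q) v"
    and R': "if fat l (grp T R q) then R' = R + {#(q, v)#}
         else R' = R + mset_set ((\<lambda>u. (q, u)) ` {u. pillar (grp T R q) u})"
    using st unfolding p2_step_def by blast
  define G where "G = grp T R q"
  define H where "H = hmax G"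
  have sub: "R \<subseteq># T" and elg: "\<And>q. eligible l (grp T R q)" and hR: "hmax R \<le> h"
    using inv unfolding inv2_def by auto
  have szR: "size R < l * h" using ne hR unfolding eligible_def
    by (meson le_trans mult_le_mono2 not_le)
  have l1: "1 \<le> l" using szR by (cases l) auto
  have H1: "1 \<le> H" using pos hv_le_hmax[of G v] unfolding H_def G_def by linarith
  have elG: "l * H \<le> size G" using elg[of q] unfolding eligible_def G_def H_def by simp
  have cG: "\<And>u. count G (q,u) = hv G u" unfolding G_def by (metis grp_sub_qclass sub_qclass_hv)
  have gen: "inv2 l T h (R + A)"
    if A: "A \<subseteq># G" and hvR: "\<And>x. hv R x + hv A x \<le> hmax R"
      and szA: "size A \<le> l" and elA: "l * hmax (G - A) \<le> size G - size A"
    for A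
  proof -
    have s1: "R + A \<subseteq># T" using add_sub_T[OF sub A[unfolded G_def]] .
    have s2: "\<forall>q'. eligible l (grp T (R + A) q')"
    proof
      fix q'
      show "eligible l (grp T (R + A) q')"
      proof (cases "q' = q")
        case True
        thus ?thesis using grp_add[OF A[unfolded G_def], of q'] elA unfolding G_def eligible_def
          by (simp add: size_Diff_submset A[unfolded G_def])
      next
        case False
        thus ?thesis using grp_add[OF A[unfolded G_def], of q'] elg[of q'] by simp
      qed
    qed
    have s3: "hmax (R + A) \<le> h"
    proof (subst hmax_le_iff, intro allI)
      fix x show "hv (R + A) x \<le> h" using hvR[of x] hR unfolding hv_add by linarith
    qed
    have s4: "size (R + A) < l * h + l" using szR szA by simp
    show ?thesis unfolding inv2_def using s1 s2 s3 s4 by blast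
  qed
  show ?thesis
  proof (cases "fat l G")
    case True
    hence R'e: "R' = R + {#(q, v)#}" using R' unfolding G_def by simp
    have "0 < count G (q,v)" using cG pos unfolding G_def by simp
    hence A: "{#(q,v)#} \<subseteq># G" by simp
    obtain w where w: "0 < hv G w" "hv R w < hmax R"
      using low_exists[OF ne elg[of q] pos] unfolding G_def by blast
    have "alive_val l T R w" unfolding alive_val_def using ag w(1) unfolding G_def by blast
    hence vlow: "hv R v < hmax R" using vmin w(2) by (meson le_less_trans)
    have hvR: "\<And>x. hv R x + hv {#(q,v)#} x \<le> hmax R"
      using vlow hv_le_hmax[of R] by (auto simp: hv_def)
    have "hmax (G - {#(q,v)#}) \<le> H" unfolding H_def by (rule hmax_mono) simp
    then have "l * hmax (G - {#(q,v)#}) \<le> size G - size {#(q,v)#}"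
    proof -
      assume a: "hmax (G - {#(q,v)#}) \<le> H"
      have b: "l * hmax (G - {#(q,v)#}) \<le> l * hmax G" using a unfolding H_def by simp
      have "l * hmax G + 1 \<le> size G" using True unfolding fat_def by simp
      moreover have "size {#(q,v)#} = 1" by simp
      ultimately show ?thesis using b by linarith
    qed
    thus ?thesis using gen[OF A hvR] l1 R'e by simp
  next
    case False
    hence R'e: "R' = R + mset_set ((\<lambda>u. (q, u)) ` {u. pillar G u})" using R' unfolding G_def by simp
    define P where "P = {u. pillar G u}"
    have thinG: "size G = l * H" using False elG unfolding fat_def H_def by simp
    have PW: "P \<subseteq> {u. 0 < hv G u}" unfolding P_def pillar_def H_def[symmetric] using H1 by auto
    have finP: "finite P"
    proof (rule finite_subset[OF PW])
      have "{u. 0 < hv G u} \<subseteq> snd ` set_mset G" unfolding hv_def by (auto simp: image_iff)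
      thus "finite {u. 0 < hv G u}" by (rule finite_subset) simp
    qed
    have hvP: "\<And>u. u \<in> P \<Longrightarrow> hv G u = H" unfolding P_def pillar_def H_def by simp
    define A where "A = mset_set ((\<lambda>u. (q, u)) ` P)"
    have inj: "inj_on (\<lambda>u. (q, u)) P" by (auto simp: inj_on_def)
    have cA: "\<And>x. count A x = (if x \<in> (\<lambda>u. (q, u)) ` P then 1 else 0)"
      unfolding A_def using finP by simp
    have hvA: "\<And>x. hv A x = (if x \<in> P then 1 else 0)"
    proof -
      fix x
      have "image_mset snd A = mset_set (snd ` (\<lambda>u. (q, u)) ` P)"
        unfolding A_def by (rule image_mset_mset_set) (auto simp: inj_on_def)
      also have "snd ` (\<lambda>u. (q, u)) ` P = P" by (auto simp: image_image)
      finally show "hv A x = (if x \<in> P then 1 else 0)" unfolding hv_def using finP by simp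
    qed
    have A: "A \<subseteq># G"
    proof (rule mset_subset_eqI)
      fix x
      show "count A x \<le> count G x"
      proof (cases "x \<in> (\<lambda>u. (q, u)) ` P")
        case True
        then obtain u where "u \<in> P" "x = (q,u)" by blast
        thus ?thesis using cA cG hvP H1 by simp
      next
        case False thus ?thesis using cA by simp
      qed
    qed
    have szA: "size A = card P" unfolding A_def using finP card_image[OF inj] by simp
    have "card P * H = (\<Sum>u\<in>P. hv G u)" using hvP by simp
    also have "\<dots> \<le> size G" using finP by (rule sum_hv_le_size)
    finally have "card P * H \<le> l * H" using thinG by simp
    hence cP: "card P \<le> l" using H1 by simp
    have nconf: "\<not> conflicting R G" using ag False elG thinG unfolding alive_grp_def G_def thin_def H_def by simp
    have hvR: "\<And>x. hv R x + hv A x \<le> hmax R"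
    proof -
      fix x
      show "hv R x + hv A x \<le> hmax R"
      proof (cases "x \<in> P")
        case True
        hence "\<not> pillar R x" using nconf unfolding conflicting_def P_def by auto
        hence "hv R x < hmax R" using hv_le_hmax[of R x] unfolding pillar_def by simp
        thus ?thesis using hvA True by simp
      next
        case False thus ?thesis using hvA hv_le_hmax[of R x] by simp
      qed
    qed
    have hmGA: "hmax (G - A) \<le> H - 1"
      unfolding hmax_le_iff
    proof
      fix x
      have "hv (G - A) x = hv G x - hv A x" unfolding hv_def using A
        by (simp add: image_mset_Diff image_mset_subseteq_mono)
      moreover have "hv G x \<le> H" unfolding H_def by (rule hv_le_hmax)
      moreover have "x \<notin> P \<Longrightarrow> hv G x \<noteq> H" unfolding P_def pillar_def H_def by simp
      ultimately show "hv (G - A) x \<le> H - 1" using hvA by (cases "x \<in> P") auto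
    qed
    have "l * hmax (G - A) \<le> l * (H - 1)" using hmGA by simp
    also have "\<dots> = l * H - l" by (simp add: diff_mult_distrib2)
    also have "\<dots> \<le> size G - size A" using thinG szA cP by simp
    finally have elA: "l * hmax (G - A) \<le> size G - size A" .
    have "R' = R + A" using R'e unfolding A_def P_def by simp
    thus ?thesis using gen[OF A hvR] szA cP elA by simp
  qed
qed


lemma sum_filter_fst: "finite A \<Longrightarrow> (\<Sum>q\<in>A. filter_mset (\<lambda>t. fst t = q) M) = filter_mset (\<lambda>t. fst t \<in> A) M"
proof (induct A rule: finite_induct)
  case empty thus ?case by (simp add: filter_mset_False)
next
  case (insert x F)
  have "filter_mset (\<lambda>t. fst t = x) M + filter_mset (\<lambda>t. fst t \<in> F) M = filter_mset (\<lambda>t. fst t \<in> insert x F) M"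
    using insert.hyps(2) by (intro multiset_eqI) auto
  thus ?case using insert by simp
qed

theorem corollary3:
  fixes l :: nat and T :: "('q \<times> 's) multiset" and R1 Rf :: "('q \<times> 's) multiset"
  assumes "eligible l T"
    and "(p1_step l T)\<^sup>*\<^sup>* {#} R1"
    and "\<forall>q\<in>QIs T. eligible l (grp T R1 q)"
    and "\<not> eligible l R1"
    and "(p2_step l T)\<^sup>*\<^sup>* R1 Rf"
    and "eligible l Rf"
  shows "is_solution l T (grp T Rf) Rf \<and> size Rf \<le> OPT l T + l - 1"
proof -
  have i1: "inv1 l T R1" using assms(2)
  proof (induct rule: rtranclp_induct)
    case base show ?case by (rule inv1_init)
  next
    case (step y z) thus ?case using inv1_step by blast
  qed
  define h where "h = hmax R1"
  have i20: "inv2 l T h R1"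
  proof -
    have "R1 \<subseteq># T" using i1 unfolding inv1_def by blast
    moreover have "\<forall>q. eligible l (grp T R1 q)"
    proof
      fix q show "eligible l (grp T R1 q)"
        using assms(3) grp_notin[of q T R1] by (cases "q \<in> QIs T") (auto simp: eligible_def hmax_empty)
    qed
    moreover have "size R1 < l * h + l" using assms(4) unfolding eligible_def h_def by simp
    ultimately show ?thesis unfolding inv2_def h_def by simp
  qed
  have i2: "inv2 l T h Rf" using assms(5)
  proof (induct rule: rtranclp_induct)
    case base show ?case by (rule i20)
  next
    case (step y z) thus ?case using inv2_step by blast
  qed
  have subf: "Rf \<subseteq># T" and elf: "\<And>q. eligible l (grp T Rf q)" and szf: "size Rf < l * h + l"
    using i2 unfolding inv2_def by auto
  have sumeq: "(\<Sum>q\<in>QIs T. grp T Rf q) = T - Rf"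
  proof -
    have "(\<Sum>q\<in>QIs T. grp T Rf q) = filter_mset (\<lambda>t. fst t \<in> QIs T) (T - Rf)"
      unfolding grp_def qclass_def QIs_def by (rule sum_filter_fst) simp
    also have "\<dots> = filter_mset (\<lambda>t. True) (T - Rf)"
      unfolding QIs_def by (intro filter_mset_cong) (auto dest: in_diffD)
    finally show ?thesis by simp
  qed
  have "T - (T - Rf) = Rf"
    using subf by (intro multiset_eqI) (simp add: mset_subset_eq_count)
  hence sol: "is_solution l T (grp T Rf) Rf"
    unfolding is_solution_def using sumeq elf assms(6) grp_sub_qclass[of T Rf] by simp
  obtain Q' R' where solR: "is_solution l T Q' R'" and szR': "size R' = OPT l T"
  proof -
    have "\<exists>n Q' R'. is_solution l T Q' R' \<and> size R' = n" using sol by blast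
    hence "\<exists>Q' R'. is_solution l T Q' R' \<and> size R' = OPT l T"
      unfolding OPT_def by (rule LeastI_ex)
    thus ?thesis using that by blast
  qed
  have R1R': "R1 \<subseteq># R'"
  proof (rule mset_subset_eqI)
    fix x :: "'q \<times> 's"
    obtain q u where x: "x = (q,u)" by (cases x)
    have R'eq: "R' = T - (\<Sum>q'\<in>QIs T. Q' q')" and Qs: "\<And>q'. q' \<in> QIs T \<Longrightarrow> Q' q' \<subseteq># qclass T q' \<and> eligible l (Q' q')"
      using solR unfolding is_solution_def by auto
    have c0: "\<And>q'. q' \<in> QIs T \<Longrightarrow> q' \<noteq> q \<Longrightarrow> count (Q' q') (q,u) = 0"
    proof -
      fix q' assume "q' \<in> QIs T" "q' \<noteq> q"
      hence "count (Q' q') (q,u) \<le> count (qclass T q') (q,u)" using Qs by (simp add: mset_subset_eq_count)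
      thus "count (Q' q') (q,u) = 0" using \<open>q' \<noteq> q\<close> unfolding qclass_def by simp
    qed
    have "count (\<Sum>q'\<in>QIs T. Q' q') (q,u) = (\<Sum>q'\<in>QIs T. if q' = q then count (Q' q) (q,u) else 0)"
      unfolding count_sum using c0 by (intro sum.cong) auto
    also have "\<dots> = (if q \<in> QIs T then count (Q' q) (q,u) else 0)"
      by (simp add: QIs_def)
    finally have cs: "count (\<Sum>q'\<in>QIs T. Q' q') (q,u) = (if q \<in> QIs T then count (Q' q) (q,u) else 0)" .
    have R1T: "count R1 (q,u) \<le> count T (q,u)" using i1 unfolding inv1_def by (simp add: mset_subset_eq_count)
    show "count R1 x \<le> count R' x"
    proof (cases "q \<in> QIs T")
      case True
      have "count (Q' q) (q,u) \<le> count T (q,u) - count R1 (q,u)"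
        using inv1_min[OF i1] Qs[OF True] by blast
      thus ?thesis using x R'eq cs True R1T by simp
    next
      case False
      hence "count T (q,u) = 0" unfolding QIs_def by (metis count_eq_zero_iff fst_conv image_eqI)
      thus ?thesis using R1T x by simp
    qed
  qed
  have "l * h \<le> l * hmax R'" unfolding h_def using hmax_mono[OF R1R'] by simp
  also have "\<dots> \<le> OPT l T"
  proof -
    have "eligible l R'" using solR unfolding is_solution_def by blast
    thus ?thesis using szR' unfolding eligible_def by simp
  qed
  finally have "l * h \<le> OPT l T" .
  hence "size Rf \<le> OPT l T + l - 1" using szf by linarith
  thus ?thesis using sol by blast
qed

end
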